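(* Let $\widetilde\nabla$ be a canonical snm-connection on $\mathbb R^3$ determined by the unit constant vector field $\mathsf C$. Then every cylindrical surface whose rulings are parallel to $\mathsf C$ has constant sectional curvature $K\equiv\tfrac12$ with respect to $\widetilde\nabla$.
   Context: Let $\langle\cdot,\cdot\rangle$ be the Euclidean metric on $\mathbb R^3$ and $\widetilde\nabla^0$ its Levi-Civita connection (the ordinary directional derivative). Given a smooth vector field $\mathsf C$ on $\mathbb R^3$, the semi-symmetric non-metric connection (snm-connection) determined by $\mathsf C$ is $\widetilde\nabla_XY=\widetilde\nabla^0_XY+\langle \mathsf C,Y\rangle X$. It is called canonical if $\mathsf C$ is a constant vector field with $|\mathsf C|=1$. Its curvature tensor is $\widetilde R(X,Y)Z=\widetilde\nabla_X\widetilde\nabla_YZ-\widetilde\nabla_Y\widetilde\nabla_XZ-\widetilde\nabla_{[X,Y]}Z$. For a surface $M$ immersed in $\mathbb R^3$, the induced connection is $\nabla_XY=(\widetilde\nabla_XY)^{\top}$ (tangential component), with curvature tensor $R$ defined by the same formula, and the sectional curvature of $M$ with respect to $\widetilde\nabla$ at $p$ is $K(p)=\frac12\big(\langle R(e_1,e_2)e_2,e_1\rangle+\langle R(e_2,e_1)e_1,e_2\rangle\big)$ for an orthonormal basis $\{e_1,e_2\}$ of $T_pM$. A cylindrical surface with rulings parallel to a unit vector $\vec w$ is a surface $\psi(s,t)=\gamma(s)+t\vec w$, $s\in I$, $t\in\mathbb R$, where $\gamma$ is a regular curve in a plane orthogonal to $\vec w$. *)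

theory Defs
  imports "HOL-Analysis.Analysis" "HOL-Analysis.Cross3"
begin

definition ds :: "(real \<times> real \<Rightarrow> 'a::real_normed_vector) \<Rightarrow> real \<times> real \<Rightarrow> 'a" where
  "ds F p = vector_derivative (\<lambda>u. F (u, snd p)) (at (fst p))"

definition dt :: "(real \<times> real \<Rightarrow> 'a::real_normed_vector) \<Rightarrow> real \<times> real \<Rightarrow> 'a" where
  "dt F p = vector_derivative (\<lambda>v. F (fst p, v)) (at (snd p))"

fun pd :: "bool list \<Rightarrow> (real \<times> real \<Rightarrow> 'a::real_normed_vector) \<Rightarrow> real \<times> real \<Rightarrow> 'a" where
  "pd [] F = F"
| "pd (b # bs) F = (if b then ds (pd bs F) else dt (pd bs F))"

definition smooth2_on :: "(real \<times> real) set \<Rightarrow> (real \<times> real \<Rightarrow> 'a::real_normed_vector) \<Rightarrow> bool" where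
  "smooth2_on S F \<longleftrightarrow>
     (\<forall>bs. continuous_on S (pd bs F) \<and>
        (\<forall>p\<in>S. (\<lambda>u. pd bs F (u, snd p)) differentiable (at (fst p)) \<and>
               (\<lambda>v. pd bs F (fst p, v)) differentiable (at (snd p))))"

definition vderiv :: "(real \<Rightarrow> 'a::real_normed_vector) \<Rightarrow> real \<Rightarrow> 'a" where
  "vderiv g s = vector_derivative g (at s)"

definition smooth1_on :: "real set \<Rightarrow> (real \<Rightarrow> 'a::real_normed_vector) \<Rightarrow> bool" where
  "smooth1_on I g \<longleftrightarrow>
     (\<forall>n. continuous_on I ((vderiv ^^ n) g) \<and> (\<forall>s\<in>I. ((vderiv ^^ n) g) differentiable (at s)))"

text \<open>Tangent vector fields on the parametrized surface psi are given by their
  coefficient fields V = (a,b) on the parameter domain: X = a psi_s + b psi_t.\<close>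

definition push :: "(real \<times> real \<Rightarrow> real^3) \<Rightarrow> (real \<times> real \<Rightarrow> real \<times> real) \<Rightarrow> real \<times> real \<Rightarrow> real^3" where
  "push \<psi> V p = fst (V p) *\<^sub>R ds \<psi> p + snd (V p) *\<^sub>R dt \<psi> p"

text \<open>Directional derivative along V of a function on the parameter domain
  (for an R^3-valued field this is the ordinary derivative nabla^0 along push psi V).\<close>

definition dirD :: "(real \<times> real \<Rightarrow> real \<times> real) \<Rightarrow> (real \<times> real \<Rightarrow> 'a::real_normed_vector) \<Rightarrow> real \<times> real \<Rightarrow> 'a" where
  "dirD V F p = fst (V p) *\<^sub>R ds F p + snd (V p) *\<^sub>R dt F p"

definition lie :: "(real \<times> real \<Rightarrow> real \<times> real) \<Rightarrow> (real \<times> real \<Rightarrow> real \<times> real) \<Rightarrow> real \<times> real \<Rightarrow> real \<times> real" where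
  "lie V W p = dirD V W p - dirD W V p"

definition unit_normal :: "(real \<times> real \<Rightarrow> real^3) \<Rightarrow> real \<times> real \<Rightarrow> real^3" where
  "unit_normal \<psi> p = (let n = cross3 (ds \<psi> p) (dt \<psi> p) in (1 / norm n) *\<^sub>R n)"

definition tang :: "(real \<times> real \<Rightarrow> real^3) \<Rightarrow> real \<times> real \<Rightarrow> real^3 \<Rightarrow> real^3" where
  "tang \<psi> p v = v - (v \<bullet> unit_normal \<psi> p) *\<^sub>R unit_normal \<psi> p"

definition snm_conn :: "real^3 \<Rightarrow> (real \<times> real \<Rightarrow> real^3) \<Rightarrow> (real \<times> real \<Rightarrow> real \<times> real) \<Rightarrow> (real \<times> real \<Rightarrow> real^3) \<Rightarrow> real \<times> real \<Rightarrow> real^3" where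
  "snm_conn C \<psi> V Y p = dirD V Y p + (C \<bullet> Y p) *\<^sub>R push \<psi> V p"

definition ind_conn :: "real^3 \<Rightarrow> (real \<times> real \<Rightarrow> real^3) \<Rightarrow> (real \<times> real \<Rightarrow> real \<times> real) \<Rightarrow> (real \<times> real \<Rightarrow> real^3) \<Rightarrow> real \<times> real \<Rightarrow> real^3" where
  "ind_conn C \<psi> V Y p = tang \<psi> p (snm_conn C \<psi> V Y p)"

definition ind_curv :: "real^3 \<Rightarrow> (real \<times> real \<Rightarrow> real^3) \<Rightarrow> (real \<times> real \<Rightarrow> real \<times> real) \<Rightarrow> (real \<times> real \<Rightarrow> real \<times> real) \<Rightarrow> (real \<times> real \<Rightarrow> real \<times> real) \<Rightarrow> real \<times> real \<Rightarrow> real^3" where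
  "ind_curv C \<psi> X Y Z p =
     ind_conn C \<psi> X (ind_conn C \<psi> Y (push \<psi> Z)) p
   - ind_conn C \<psi> Y (ind_conn C \<psi> X (push \<psi> Z)) p
   - ind_conn C \<psi> (lie X Y) (push \<psi> Z) p"

text \<open>Sectional curvature expression for fields E1, E2 (orthonormal at p).\<close>

definition sect_curv :: "real^3 \<Rightarrow> (real \<times> real \<Rightarrow> real^3) \<Rightarrow> (real \<times> real \<Rightarrow> real \<times> real) \<Rightarrow> (real \<times> real \<Rightarrow> real \<times> real) \<Rightarrow> real \<times> real \<Rightarrow> real" where
  "sect_curv C \<psi> E1 E2 p =
     (1/2) * (ind_curv C \<psi> E1 E2 E2 p \<bullet> push \<psi> E1 p + ind_curv C \<psi> E2 E1 E1 p \<bullet> push \<psi> E2 p)"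

end

theory Submission
  imports Defs
begin


lemma ds_eqR: "((\<lambda>u. F (u, snd q)) has_real_derivative D) (at (fst q)) \<Longrightarrow> ds F q = (D::real)"
  by (simp add: ds_def vector_derivative_at has_real_derivative_iff_has_vector_derivative)

lemma dt_eqR: "((\<lambda>v. F (fst q, v)) has_real_derivative D) (at (snd q)) \<Longrightarrow> dt F q = (D::real)"
  by (simp add: dt_def vector_derivative_at has_real_derivative_iff_has_vector_derivative)

lemma clairaut_lim:
  fixes f :: "real \<times> real \<Rightarrow> real" and s t r :: real
  assumes r: "r > 0"
   and H1: "\<And>q. dist q (s,t) < r \<Longrightarrow> ((\<lambda>u. f(u, snd q)) has_real_derivative ds f q) (at (fst q))"
   and H3: "\<And>q. dist q (s,t) < r \<Longrightarrow> ((\<lambda>v. ds f(fst q, v)) has_real_derivative dt (ds f) q) (at (snd q))"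
   and C: "isCont (dt (ds f)) (s,t)"
  shows "((\<lambda>h. (f (s+h, t+h) - f (s+h, t) - f (s, t+h) + f (s,t)) / h^2) \<longlongrightarrow> dt (ds f) (s,t)) (at_right 0)"
proof -
  let ?D = "dt (ds f)"
  have near: "dist (u,v) (s,t) < r" if "s \<le> u" "u \<le> s+h" "t \<le> v" "v \<le> t+h" "h < r/2" for u v h
  proof -
    have "dist (u,v) (s,t) \<le> \<bar>u-s\<bar> + \<bar>v-t\<bar>"
      using sqrt_sum_squares_le_sum_abs[of "u-s" "v-t"] by (simp add: dist_Pair_Pair dist_real_def)
    also have "\<dots> < r" using that by auto
    finally show ?thesis .
  qed
  have key: "\<exists>z. s < fst z \<and> fst z < s+h \<and> t < snd z \<and> snd z < t+h \<and>
      f(s+h,t+h) - f(s+h,t) - f(s,t+h) + f(s,t) = h^2 * ?D z" if h: "0<h" "h<r/2" for h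
  proof -
    have "((\<lambda>u. f(u,t+h) - f(u,t)) has_real_derivative (ds f (u,t+h) - ds f (u,t))) (at u)"
      if "s \<le> u" "u \<le> s+h" for u
    proof -
      have "dist (u,t+h) (s,t) < r" "dist (u,t) (s,t) < r"
        by (rule near; use that h in auto)+
      then show ?thesis using H1[of "(u,t+h)"] H1[of "(u,t)"]
        by (auto intro!: derivative_eq_intros)
    qed
    from MVT2[of s "s+h", OF _ this] h obtain x where x: "s < x" "x < s+h"
      "(f(s+h,t+h) - f(s+h,t)) - (f(s,t+h) - f(s,t)) = h * (ds f (x,t+h) - ds f (x,t))" by auto
    have "((\<lambda>v. ds f (x, v)) has_real_derivative ?D (x,v)) (at v)"
      if "t \<le> v" "v \<le> t+h" for v
    proof -
      have "dist (x,v) (s,t) < r" by (rule near; use that h x in auto)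
      then show ?thesis using H3[of "(x,v)"] by auto
    qed
    from MVT2[of t "t+h", OF _ this] h obtain y where y: "t < y" "y < t+h"
      "ds f (x,t+h) - ds f (x,t) = h * ?D (x,y)" by auto
    show ?thesis
      by (rule exI[of _ "(x,y)"]) (use x y in \<open>auto simp: power2_eq_square algebra_simps\<close>)
  qed
  have "\<forall>h\<in>{0<..<r/2}. \<exists>z. s < fst z \<and> fst z < s+h \<and> t < snd z \<and> snd z < t+h \<and>
      f(s+h,t+h) - f(s+h,t) - f(s,t+h) + f(s,t) = h^2 * ?D z" using key by auto
  then obtain Z where Z: "\<And>h. h\<in>{0<..<r/2} \<Longrightarrow> s < fst (Z h) \<and> fst (Z h) < s+h \<and> t < snd (Z h) \<and> snd (Z h) < t+h \<and>
      f(s+h,t+h) - f(s+h,t) - f(s,t+h) + f(s,t) = h^2 * ?D (Z h)"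
    by metis
  have ev: "eventually (\<lambda>h. h \<in> {0<..<r/2}) (at_right (0::real))"
    using r by (auto simp: eventually_at_right_field intro: exI[of _ "r/2"])
  have "((\<lambda>h. fst (Z h)) \<longlongrightarrow> s) (at_right 0)"
  proof (rule tendsto_sandwich[of "\<lambda>_. s" _ _ "\<lambda>h. s + h"])
    show "\<forall>\<^sub>F n in at_right 0. s \<le> fst (Z n)" using ev by eventually_elim (use Z in force)
    show "\<forall>\<^sub>F n in at_right 0. fst (Z n) \<le> s + n" using ev by eventually_elim (use Z in force)
    show "((\<lambda>h. s + h) \<longlongrightarrow> s) (at_right 0)"
      by (rule tendsto_eq_intros, rule tendsto_const, rule tendsto_ident_at, simp)
  qed simp
  moreover have "((\<lambda>h. snd (Z h)) \<longlongrightarrow> t) (at_right 0)"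
  proof (rule tendsto_sandwich[of "\<lambda>_. t" _ _ "\<lambda>h. t + h"])
    show "\<forall>\<^sub>F n in at_right 0. t \<le> snd (Z n)" using ev by eventually_elim (use Z in force)
    show "\<forall>\<^sub>F n in at_right 0. snd (Z n) \<le> t + n" using ev by eventually_elim (use Z in force)
    show "((\<lambda>h. t + h) \<longlongrightarrow> t) (at_right 0)"
      by (rule tendsto_eq_intros, rule tendsto_const, rule tendsto_ident_at, simp)
  qed simp
  ultimately have "((\<lambda>h. (fst (Z h), snd (Z h))) \<longlongrightarrow> (s,t)) (at_right 0)"
    by (rule tendsto_Pair)
  hence "((\<lambda>h. ?D (Z h)) \<longlongrightarrow> ?D (s,t)) (at_right 0)"
    using isCont_tendsto_compose[OF C] by simp
  moreover have "eventually (\<lambda>h. ?D (Z h) = (f (s+h, t+h) - f (s+h, t) - f (s, t+h) + f (s,t)) / h^2) (at_right 0)"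
    using ev by eventually_elim (use Z in auto)
  ultimately show ?thesis by (rule Lim_transform_eventually)
qed

lemma clairaut:
  fixes f :: "real \<times> real \<Rightarrow> real"
  assumes r: "r > 0"
   and H1: "\<And>q. dist q p < r \<Longrightarrow> ((\<lambda>u. f(u, snd q)) has_real_derivative ds f q) (at (fst q))"
   and H2: "\<And>q. dist q p < r \<Longrightarrow> ((\<lambda>v. f(fst q, v)) has_real_derivative dt f q) (at (snd q))"
   and H3: "\<And>q. dist q p < r \<Longrightarrow> ((\<lambda>v. ds f(fst q, v)) has_real_derivative dt (ds f) q) (at (snd q))"
   and H4: "\<And>q. dist q p < r \<Longrightarrow> ((\<lambda>u. dt f(u, snd q)) has_real_derivative ds (dt f) q) (at (fst q))"
   and C1: "isCont (dt (ds f)) p" and C2: "isCont (ds (dt f)) p"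
  shows "dt (ds f) p = ds (dt f) p"
proof -
  obtain s t where p: "p = (s,t)" by (cases p)
  define g where "g = (\<lambda>q. f (snd q, fst q))"
  have dsg: "ds g q = dt f (snd q, fst q)" for q
    by (simp add: ds_def dt_def g_def)
  have dtdsg: "dt (ds g) q = ds (dt f) (snd q, fst q)" for q
    by (simp add: ds_def dt_def g_def)
  have dsw: "dist (snd q, fst q) (s,t) = dist q (t,s)" for q
    by (cases q) (simp add: dist_Pair_Pair add.commute)
  have L1: "((\<lambda>h. (f (s+h, t+h) - f (s+h, t) - f (s, t+h) + f (s,t)) / h^2) \<longlongrightarrow> dt (ds f) (s,t)) (at_right 0)"
    by (rule clairaut_lim[OF r]) (use H1 H3 C1 p in auto)
  have L2: "((\<lambda>h. (g (t+h, s+h) - g (t+h, s) - g (t, s+h) + g (t,s)) / h^2) \<longlongrightarrow> dt (ds g) (t,s)) (at_right 0)"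
  proof (rule clairaut_lim[OF r])
    fix q :: "real \<times> real" assume q: "dist q (t,s) < r"
    then have q': "dist (snd q, fst q) p < r" using dsw p by simp
    show "((\<lambda>u. g (u, snd q)) has_real_derivative ds g q) (at (fst q))"
      using H2[OF q'] unfolding dsg by (simp add: g_def)
    show "((\<lambda>v. ds g (fst q, v)) has_real_derivative dt (ds g) q) (at (snd q))"
      using H4[OF q'] by (simp add: dsg dtdsg)
  next
    have "isCont (\<lambda>q. ds (dt f) (snd q, fst q)) (t,s)"
      using C2 p by (intro continuous_intros isCont_o2[where f="\<lambda>q. (snd q, fst q)" and g="ds (dt f)", simplified o_def]) auto
    then show "isCont (dt (ds g)) (t, s)" by (simp add: dtdsg[abs_def])
  qed
  have "dt (ds g) (t,s) = ds (dt f) (s,t)" by (simp add: dtdsg)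
  moreover have "(\<lambda>h. (g (t+h, s+h) - g (t+h, s) - g (t, s+h) + g (t,s)) / h^2) =
     (\<lambda>h. (f (s+h, t+h) - f (s+h, t) - f (s, t+h) + f (s,t)) / h^2)"
    by (simp add: g_def algebra_simps)
  ultimately have L2': "((\<lambda>h. (f (s+h, t+h) - f (s+h, t) - f (s, t+h) + f (s,t)) / h^2) \<longlongrightarrow> ds (dt f) (s,t)) (at_right 0)"
    using L2 by simp
  show ?thesis using tendsto_unique[OF trivial_limit_at_right_real L1 L2'] p by simp
qed



lemma cross_decomp:
  fixes a b r :: "real^3"
  shows "(norm (cross3 a b))\<^sup>2 *\<^sub>R r = ((b\<bullet>b)*(r\<bullet>a) - (a\<bullet>b)*(r\<bullet>b)) *\<^sub>R a + ((a\<bullet>a)*(r\<bullet>b) - (a\<bullet>b)*(r\<bullet>a)) *\<^sub>R b + (r \<bullet> cross3 a b) *\<^sub>R cross3 a b"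
  unfolding power2_norm_eq_inner
  by (simp add: cross3_def inner_vec_def sum_3 vec_eq_iff forall_3 vector_def algebra_simps)

lemma times_comm_fun: "(\<lambda>x::real. x * a) = (*) a" by (auto simp: fun_eq_iff)

lemma hvd_inner:
  "(f has_vector_derivative f') F \<Longrightarrow> ((\<lambda>x. f x \<bullet> c) has_real_derivative (f' \<bullet> c)) F"
  unfolding has_vector_derivative_def has_field_derivative_def
  by (drule has_derivative_inner_left[of _ _ _ c]) (simp add: times_comm_fun)

lemma hvd_fst:
  "(f has_vector_derivative f') F \<Longrightarrow> ((\<lambda>x. fst (f x)) has_real_derivative (fst f')) F"
  unfolding has_vector_derivative_def has_field_derivative_def
  by (drule has_derivative_fst) (simp add: times_comm_fun)

lemma hvd_snd:
  "(f has_vector_derivative f') F \<Longrightarrow> ((\<lambda>x. snd (f x)) has_real_derivative (snd f')) F"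
  unfolding has_vector_derivative_def has_field_derivative_def
  by (drule has_derivative_snd) (simp add: times_comm_fun)

lemma vd_cong_open:
  assumes "open I" "s \<in> I" "\<And>u. u \<in> I \<Longrightarrow> f u = g u"
  shows "vector_derivative f (at s) = vector_derivative g (at s)"
proof (rule vector_derivative_cong_eq)
  show "\<forall>\<^sub>F x in nhds s. x \<in> UNIV \<longrightarrow> f x = g x"
    using eventually_nhds_in_open[OF assms(1,2)] by eventually_elim (use assms in auto)
qed auto



locale cyl =
  fixes C w :: "real^3" and \<gamma> :: "real \<Rightarrow> real^3" and I :: "real set"
  assumes C_unit: "norm C = 1" and w_unit: "norm w = 1" and w_parallel: "\<exists>c. w = c *\<^sub>R C"
    and I_open: "open I" and \<gamma>_smooth: "smooth1_on I \<gamma>"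
    and \<gamma>_regular: "\<forall>s\<in>I. vector_derivative \<gamma> (at s) \<noteq> 0"
    and \<gamma>_planar: "\<exists>c. \<forall>s\<in>I. \<gamma> s \<bullet> w = c"
begin

definition "T s = vector_derivative \<gamma> (at s)"
definition "T2 s = vector_derivative T (at s)"
definition "\<kappa> s = (T s \<bullet> T2 s) / (T s \<bullet> T s)"
definition "cc = C \<bullet> w"

lemma diffs:
  assumes "s \<in> I"
  shows "\<gamma> differentiable at s" "T differentiable at s" "T2 differentiable at s"
proof -
  have e1: "vderiv \<gamma> = T" by (auto simp: fun_eq_iff vderiv_def T_def)
  have e: "vderiv \<gamma> = T" "vderiv (vderiv \<gamma>) = T2"
    unfolding e1 by (auto simp: fun_eq_iff T2_def vderiv_def)
  have d: "(vderiv ^^ n) \<gamma> differentiable at s" for n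
    using \<gamma>_smooth assms unfolding smooth1_on_def by blast
  show "\<gamma> differentiable at s" using d[of 0] by simp
  show "T differentiable at s" using d[of 1] e by simp
  show "T2 differentiable at s" using d[of 2] e by (simp add: numeral_2_eq_2)
qed

lemma hasT: "s \<in> I \<Longrightarrow> (\<gamma> has_vector_derivative T s) (at s)"
  using diffs(1) vector_derivative_works T_def by metis

lemma hasT2: "s \<in> I \<Longrightarrow> (T has_vector_derivative T2 s) (at s)"
  using diffs(2) vector_derivative_works T2_def by metis

lemma hasT3: "s \<in> I \<Longrightarrow> (T2 has_vector_derivative vector_derivative T2 (at s)) (at s)"
  using diffs(3) vector_derivative_works by metis

lemma Tw: assumes "s \<in> I" shows "T s \<bullet> w = 0"
proof -
  obtain k where k: "\<forall>s\<in>I. \<gamma> s \<bullet> w = k" using \<gamma>_planar by blast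
  have 1: "((\<lambda>u. \<gamma> u \<bullet> w) has_real_derivative T s \<bullet> w) (at s)"
    by (rule hvd_inner[OF hasT[OF assms]])
  have 2: "((\<lambda>u. \<gamma> u \<bullet> w) has_real_derivative 0) (at s)"
    by (rule has_field_derivative_transform_within_open[OF DERIV_const I_open assms]) (use k in auto)
  show ?thesis using DERIV_unique[OF 1 2] .
qed

lemma T2w: assumes "s \<in> I" shows "T2 s \<bullet> w = 0"
proof -
  have 1: "((\<lambda>u. T u \<bullet> w) has_real_derivative T2 s \<bullet> w) (at s)"
    by (rule hvd_inner[OF hasT2[OF assms]])
  have 2: "((\<lambda>u. T u \<bullet> w) has_real_derivative 0) (at s)"
    by (rule has_field_derivative_transform_within_open[OF DERIV_const I_open assms]) (use Tw in auto)
  show ?thesis using DERIV_unique[OF 1 2] .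
qed

lemma T_nz: "s \<in> I \<Longrightarrow> T s \<noteq> 0"
  using \<gamma>_regular T_def by auto

lemma G_pos: "s \<in> I \<Longrightarrow> T s \<bullet> T s > 0"
  using T_nz by simp

lemma C_eq: "C = cc *\<^sub>R w" and cc_sq: "cc * cc = 1"
proof -
  obtain c0 where c0: "w = c0 *\<^sub>R C" using w_parallel by blast
  have "\<bar>c0\<bar> = 1" using w_unit C_unit c0 by simp
  hence c2: "c0 * c0 = 1" by (metis abs_mult_self_eq mult_1)
  have CC: "C \<bullet> C = 1" using C_unit by (simp add: norm_eq_1)
  have "C \<bullet> w = c0" using CC c0 by simp
  then have "cc = c0" by (simp add: cc_def)
  then show "cc * cc = 1" using c2 by simp
  show "C = cc *\<^sub>R w" using \<open>cc = c0\<close> c0 c2 by simp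
qed

lemma CT: "s \<in> I \<Longrightarrow> C \<bullet> T s = 0"
  using Tw[of s] by (subst C_eq) (simp add: inner_commute)

lemma Cw: "C \<bullet> w = cc" by (simp add: cc_def)

lemma ww: "w \<bullet> w = 1" using w_unit by (simp add: norm_eq_1)

lemma ds_psi: "fst q \<in> I \<Longrightarrow> ds (\<lambda>(s', t'). \<gamma> s' + t' *\<^sub>R w) q = T (fst q)"
  unfolding ds_def
  by (rule vector_derivative_at) (auto intro!: derivative_eq_intros hasT)

lemma dt_psi: "dt (\<lambda>(s', t'). \<gamma> s' + t' *\<^sub>R w) q = w"
  unfolding dt_def
  by (rule vector_derivative_at) (auto intro!: derivative_eq_intros)

lemma cross_nz: assumes "s \<in> I" shows "cross3 (T s) w \<noteq> 0"
proof
  assume "cross3 (T s) w = 0"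
  then have "(T s \<bullet> w)\<^sup>2 = (norm (T s))\<^sup>2" using norm_cross_dot[of "T s" w] w_unit by simp
  then show False using Tw[OF assms] T_nz[OF assms] by simp
qed

lemma tang_eq:
  assumes s: "s \<in> I"
  shows "tang (\<lambda>(s', t'). \<gamma> s' + t' *\<^sub>R w) (s,t) (a *\<^sub>R T s + b *\<^sub>R w + e *\<^sub>R T2 s) = (a + e * \<kappa> s) *\<^sub>R T s + b *\<^sub>R w"
proof -
  define N where "N = cross3 (T s) w"
  define n where "n = (1 / norm N) *\<^sub>R N"
  have un: "unit_normal (\<lambda>(s', t'). \<gamma> s' + t' *\<^sub>R w) (s,t) = n"
    unfolding unit_normal_def n_def N_def Let_def using ds_psi[of "(s,t)"] dt_psi[of "(s,t)"] s by simp
  have Nnz: "norm N \<noteq> 0" using cross_nz[OF s] N_def by simp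
  have TN: "T s \<bullet> N = 0" "w \<bullet> N = 0" unfolding N_def by (simp_all add: dot_cross_self)
  have Tn: "T s \<bullet> n = 0" "w \<bullet> n = 0" unfolding n_def using TN by simp_all
  have GG: "T s \<bullet> T s \<noteq> 0" using G_pos[OF s] by simp
  define r where "r = T2 s - \<kappa> s *\<^sub>R T s - (T2 s \<bullet> n) *\<^sub>R n"
  have Tn': "n \<bullet> T s = 0" using Tn by (simp add: inner_commute)
  have rT: "r \<bullet> T s = 0" unfolding r_def \<kappa>_def using Tn Tn' GG
    by (simp add: inner_diff_left inner_commute[of "T2 s" "T s"])
  have rw: "r \<bullet> w = 0" unfolding r_def using Tn Tw[OF s] T2w[OF s]
    by (simp add: inner_diff_right inner_commute)
  have nN: "n \<bullet> N = norm N" unfolding n_def using Nnz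
    by (simp add: power2_norm_eq_inner[symmetric] power2_eq_square)
  have NN: "N \<bullet> N = norm N * norm N" by (simp add: power2_norm_eq_inner[symmetric] power2_eq_square)
  have rN: "r \<bullet> N = 0" unfolding r_def using TN Nnz
    by (simp add: inner_diff_left inner_diff_right inner_commute n_def NN)
  have "(norm N)\<^sup>2 *\<^sub>R r = 0"
    using cross_decomp[of "T s" w r] rT rw rN unfolding N_def[symmetric] by simp
  then have r0: "r = 0" using Nnz by simp
  then have key: "T2 s - (T2 s \<bullet> n) *\<^sub>R n = \<kappa> s *\<^sub>R T s" unfolding r_def by (simp add: algebra_simps)
  have "tang (\<lambda>(s', t'). \<gamma> s' + t' *\<^sub>R w) (s,t) (a *\<^sub>R T s + b *\<^sub>R w + e *\<^sub>R T2 s)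
      = a *\<^sub>R T s + b *\<^sub>R w + e *\<^sub>R (T2 s - (T2 s \<bullet> n) *\<^sub>R n)"
    unfolding tang_def un using Tn by (simp add: inner_add_left algebra_simps)
  also have "\<dots> = (a + e * \<kappa> s) *\<^sub>R T s + b *\<^sub>R w" unfolding key by (simp add: algebra_simps)
  finally show ?thesis .
qed

end


definition PD :: "(real \<times> real \<Rightarrow> real) \<Rightarrow> real \<times> real \<Rightarrow> bool" where
  "PD f q \<longleftrightarrow> ((\<lambda>u. f (u, snd q)) has_real_derivative ds f q) (at (fst q)) \<and>
               ((\<lambda>v. f (fst q, v)) has_real_derivative dt f q) (at (snd q))"

lemma hvd_bl:
  assumes "bounded_linear pr" "(f has_vector_derivative f') F"
  shows "((\<lambda>x. pr (f x)) has_real_derivative (pr f')) F"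
proof -
  interpret bounded_linear pr by fact
  have "((\<lambda>x. pr (f x)) has_derivative (\<lambda>h. pr (h *\<^sub>R f'))) F"
    using assms(2) unfolding has_vector_derivative_def by (rule has_derivative)
  then show ?thesis unfolding has_field_derivative_def by (simp add: scaleR times_comm_fun)
qed

lemma comp_bl:
  fixes F :: "real \<times> real \<Rightarrow> 'a::real_normed_vector" and pr :: "'a \<Rightarrow> real"
  assumes bl: "bounded_linear pr"
    and d1: "(\<lambda>u. F (u, snd q)) differentiable at (fst q)"
    and d2: "(\<lambda>v. F (fst q, v)) differentiable at (snd q)"
  shows "PD (\<lambda>q. pr (F q)) q" "ds (\<lambda>q. pr (F q)) q = pr (ds F q)" "dt (\<lambda>q. pr (F q)) q = pr (dt F q)"
proof -
  have h1: "((\<lambda>u. pr (F (u, snd q))) has_real_derivative pr (ds F q)) (at (fst q))"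
    using hvd_bl[OF bl vector_derivative_works[THEN iffD1, OF d1]] unfolding ds_def .
  have h2: "((\<lambda>v. pr (F (fst q, v))) has_real_derivative pr (dt F q)) (at (snd q))"
    using hvd_bl[OF bl vector_derivative_works[THEN iffD1, OF d2]] unfolding dt_def .
  show e1: "ds (\<lambda>q. pr (F q)) q = pr (ds F q)" using ds_eqR[OF h1] .
  show e2: "dt (\<lambda>q. pr (F q)) q = pr (dt F q)" using dt_eqR[OF h2] .
  show "PD (\<lambda>q. pr (F q)) q" unfolding PD_def e1 e2 using h1 h2 by simp
qed

context cyl begin

abbreviation S where "S \<equiv> I \<times> (UNIV::real set)"

lemma open_S: "open S" using I_open by (simp add: open_Times)

lemma eqS:
  assumes eq: "\<forall>q'\<in>S. g q' = h q'" and q: "q \<in> S" and P: "PD h q"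
  shows "PD g q" "ds g q = ds h q" "dt g q = dt h q"
proof -
  have 1: "((\<lambda>u. g (u, snd q)) has_real_derivative ds h q) (at (fst q))"
    by (rule has_field_derivative_transform_within_open[OF _ I_open, where f="\<lambda>u. h (u, snd q)"])
      (use P q eq in \<open>auto simp: PD_def\<close>)
  have "(\<lambda>v. g (fst q, v)) = (\<lambda>v. h (fst q, v))" using q eq by auto
  then have 2: "((\<lambda>v. g (fst q, v)) has_real_derivative dt h q) (at (snd q))"
    using P by (simp add: PD_def)
  show e1: "ds g q = ds h q" using ds_eqR[OF 1] .
  show e2: "dt g q = dt h q" using dt_eqR[OF 2] .
  show "PD g q" unfolding PD_def e1 e2 using 1 2 by simp
qed

lemma sm_diff:
  assumes "smooth2_on S E" "q \<in> S"
  shows "(\<lambda>u. pd bs E (u, snd q)) differentiable at (fst q)" "(\<lambda>v. pd bs E (fst q, v)) differentiable at (snd q)"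
  using assms unfolding smooth2_on_def by auto

lemma smooth_comp:
  fixes E :: "real \<times> real \<Rightarrow> real \<times> real" and pr :: "real \<times> real \<Rightarrow> real"
  assumes sm: "smooth2_on S E" and bl: "bounded_linear pr" and q: "q \<in> S"
  shows "PD (\<lambda>q. pr (E q)) q" "PD (ds (\<lambda>q. pr (E q))) q" "PD (dt (\<lambda>q. pr (E q))) q"
    "ds (\<lambda>q. pr (E q)) q = pr (ds E q)" "dt (\<lambda>q. pr (E q)) q = pr (dt E q)"
    "dt (ds (\<lambda>q. pr (E q))) q = pr (dt (ds E) q)" "ds (dt (\<lambda>q. pr (E q))) q = pr (ds (dt E) q)"
proof -
  note d0 = sm_diff[OF sm, of _ "[]", simplified]
  note d1 = sm_diff[OF sm, of _ "[True]", simplified]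
  note d2 = sm_diff[OF sm, of _ "[False]", simplified]
  have c0: "PD (\<lambda>q. pr (E q)) q'" "ds (\<lambda>q. pr (E q)) q' = pr (ds E q')" "dt (\<lambda>q. pr (E q)) q' = pr (dt E q')"
    if "q' \<in> S" for q' using comp_bl[OF bl d0[OF that]] by auto
  show "PD (\<lambda>q. pr (E q)) q" "ds (\<lambda>q. pr (E q)) q = pr (ds E q)" "dt (\<lambda>q. pr (E q)) q = pr (dt E q)"
    using c0 q by auto
  have "PD (\<lambda>q. pr (ds E q)) q" "dt (\<lambda>q. pr (ds E q)) q = pr (dt (ds E) q)"
    using comp_bl[OF bl d1[OF q]] by auto
  then show "PD (ds (\<lambda>q. pr (E q))) q" "dt (ds (\<lambda>q. pr (E q))) q = pr (dt (ds E) q)"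
    using eqS[of "ds (\<lambda>q. pr (E q))" "\<lambda>q. pr (ds E q)" q] c0 q by auto
  have "PD (\<lambda>q. pr (dt E q)) q" "ds (\<lambda>q. pr (dt E q)) q = pr (ds (dt E) q)"
    using comp_bl[OF bl d2[OF q]] by auto
  then show "PD (dt (\<lambda>q. pr (E q))) q" "ds (dt (\<lambda>q. pr (E q))) q = pr (ds (dt E) q)"
    using eqS[of "dt (\<lambda>q. pr (E q))" "\<lambda>q. pr (dt E q)" q] c0 q by auto
qed

lemma smooth_clairaut:
  fixes E :: "real \<times> real \<Rightarrow> real \<times> real" and pr :: "real \<times> real \<Rightarrow> real"
  assumes sm: "smooth2_on S E" and bl: "bounded_linear pr" and p: "p \<in> S"
  shows "dt (ds (\<lambda>q. pr (E q))) p = ds (dt (\<lambda>q. pr (E q))) p"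
proof -
  let ?e = "\<lambda>q. pr (E q)"
  obtain r where r: "r > 0" "ball p r \<subseteq> S" using open_S p open_contains_ball by blast
  have inS: "q \<in> S" if "dist q p < r" for q using r that by (auto simp: dist_commute)
  note sc = smooth_comp[OF sm bl]
  have cont1: "continuous_on S (\<lambda>q. pr (dt (ds E) q))"
  proof -
    have "continuous_on S (pd [False, True] E)" using sm unfolding smooth2_on_def by blast
    then show ?thesis
      using bl by (auto intro!: continuous_on_compose2[OF linear_continuous_on[OF bl]])
  qed
  have cont2: "continuous_on S (\<lambda>q. pr (ds (dt E) q))"
  proof -
    have "continuous_on S (pd [True, False] E)" using sm unfolding smooth2_on_def by blast
    then show ?thesis
      using bl by (auto intro!: continuous_on_compose2[OF linear_continuous_on[OF bl]])
  qed
  have "continuous_on S (dt (ds ?e))"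
    using cont1 by (rule continuous_on_cong[THEN iffD1, rotated 2]) (use sc(6) in auto)
  hence C1: "isCont (dt (ds ?e)) p" using continuous_on_eq_continuous_at[OF open_S] p by blast
  have "continuous_on S (ds (dt ?e))"
    using cont2 by (rule continuous_on_cong[THEN iffD1, rotated 2]) (use sc(7) in auto)
  hence C2: "isCont (ds (dt ?e)) p" using continuous_on_eq_continuous_at[OF open_S] p by blast
  show ?thesis
  proof (rule clairaut[OF r(1) _ _ _ _ C1 C2])
    fix q assume "dist q p < r"
    then have q: "q \<in> S" by (rule inS)
    show "((\<lambda>u. ?e (u, snd q)) has_real_derivative ds ?e q) (at (fst q))"
      using sc(1)[OF q] by (simp add: PD_def)
    show "((\<lambda>v. ?e (fst q, v)) has_real_derivative dt ?e q) (at (snd q))"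
      using sc(1)[OF q] by (simp add: PD_def)
    show "((\<lambda>v. ds ?e (fst q, v)) has_real_derivative dt (ds ?e) q) (at (snd q))"
      using sc(2)[OF q] by (simp add: PD_def)
    show "((\<lambda>u. dt ?e (u, snd q)) has_real_derivative ds (dt ?e) q) (at (fst q))"
      using sc(3)[OF q] by (simp add: PD_def)
  qed
qed

end


context cyl begin

definition Dv :: "(real \<times> real \<Rightarrow> real \<times> real) \<Rightarrow> (real \<times> real \<Rightarrow> real) \<Rightarrow> real \<times> real \<Rightarrow> real" where
  "Dv V f q = fst (V q) * ds f q + snd (V q) * dt f q"

definition N :: "(real \<times> real \<Rightarrow> real \<times> real) \<Rightarrow> (real \<times> real \<Rightarrow> real \<times> real) \<Rightarrow> real \<times> real \<Rightarrow> real \<times> real" where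
  "N V Z = (\<lambda>q. (Dv V (\<lambda>q. fst (Z q)) q + \<kappa> (fst q) * fst (V q) * fst (Z q) + cc * snd (Z q) * fst (V q),
                 Dv V (\<lambda>q. snd (Z q)) q + cc * snd (Z q) * snd (V q)))"

lemma push_eq: "q \<in> S \<Longrightarrow> push (\<lambda>(s', t'). \<gamma> s' + t' *\<^sub>R w) V q = fst (V q) *\<^sub>R T (fst q) + snd (V q) *\<^sub>R w"
  by (cases q) (simp add: push_def ds_psi dt_psi)

lemma conn_formula:
  assumes q: "q \<in> S" and P1: "PD (\<lambda>q. fst (Z q)) q" and P2: "PD (\<lambda>q. snd (Z q)) q"
  shows "ind_conn C (\<lambda>(s', t'). \<gamma> s' + t' *\<^sub>R w) V (push (\<lambda>(s', t'). \<gamma> s' + t' *\<^sub>R w) Z) q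
       = push (\<lambda>(s', t'). \<gamma> s' + t' *\<^sub>R w) (N V Z) q"
proof -
  let ?\<psi> = "\<lambda>(s'::real, t'::real). \<gamma> s' + t' *\<^sub>R w"
  obtain s t where qq: "q = (s,t)" by (cases q)
  have s: "s \<in> I" using q qq by auto
  let ?z1 = "\<lambda>q. fst (Z q)" and ?z2 = "\<lambda>q. snd (Z q)"
  have h1: "((\<lambda>u. fst (Z (u,t))) has_real_derivative ds ?z1 q) (at s)"
   and h2: "((\<lambda>u. snd (Z (u,t))) has_real_derivative ds ?z2 q) (at s)"
    using P1 P2 qq by (auto simp: PD_def)
  have k1: "((\<lambda>v. fst (Z (s,v))) has_real_derivative dt ?z1 q) (at t)"
   and k2: "((\<lambda>v. snd (Z (s,v))) has_real_derivative dt ?z2 q) (at t)"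
    using P1 P2 qq by (auto simp: PD_def)
  have dsP: "ds (push ?\<psi> Z) q = ds ?z1 q *\<^sub>R T s + fst (Z q) *\<^sub>R T2 s + ds ?z2 q *\<^sub>R w"
  proof -
    have "ds (push ?\<psi> Z) q = vector_derivative (\<lambda>u. fst (Z (u,t)) *\<^sub>R T u + snd (Z (u,t)) *\<^sub>R w) (at s)"
      unfolding ds_def qq fst_conv snd_conv
      by (rule vd_cong_open[OF I_open s]) (simp add: push_eq)
    also have "\<dots> = ds ?z1 q *\<^sub>R T s + fst (Z q) *\<^sub>R T2 s + ds ?z2 q *\<^sub>R w"
      by (rule vector_derivative_at)
        (auto intro!: derivative_eq_intros h1 h2 hasT2[OF s] simp: qq algebra_simps)
    finally show ?thesis .
  qed
  have dtP: "dt (push ?\<psi> Z) q = dt ?z1 q *\<^sub>R T s + dt ?z2 q *\<^sub>R w"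
  proof -
    have "dt (push ?\<psi> Z) q = vector_derivative (\<lambda>v. fst (Z (s,v)) *\<^sub>R T s + snd (Z (s,v)) *\<^sub>R w) (at t)"
      unfolding dt_def qq fst_conv snd_conv using push_eq s by simp
    also have "\<dots> = dt ?z1 q *\<^sub>R T s + dt ?z2 q *\<^sub>R w"
      by (rule vector_derivative_at)
        (auto intro!: derivative_eq_intros k1 k2 simp: qq algebra_simps)
    finally show ?thesis .
  qed
  have Cp: "C \<bullet> push ?\<psi> Z q = snd (Z q) * cc"
    using push_eq[OF q] CT[OF s] Cw qq by (simp add: inner_add_right)
  define A where "A = fst (V q) * ds ?z1 q + snd (V q) * dt ?z1 q + cc * snd (Z q) * fst (V q)"
  define B where "B = fst (V q) * ds ?z2 q + snd (V q) * dt ?z2 q + cc * snd (Z q) * snd (V q)"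
  define E where "E = fst (V q) * fst (Z q)"
  have arg: "snm_conn C ?\<psi> V (push ?\<psi> Z) q = A *\<^sub>R T s + B *\<^sub>R w + E *\<^sub>R T2 s"
    unfolding snm_conn_def dirD_def dsP dtP Cp push_eq[OF q] A_def B_def E_def
    by (simp add: algebra_simps qq CT[OF s] Cw)
  have "ind_conn C ?\<psi> V (push ?\<psi> Z) q = tang ?\<psi> (s,t) (A *\<^sub>R T s + B *\<^sub>R w + E *\<^sub>R T2 s)"
    unfolding ind_conn_def arg by (simp add: qq)
  also have "\<dots> = (A + E * \<kappa> s) *\<^sub>R T s + B *\<^sub>R w" by (rule tang_eq[OF s])
  also have "\<dots> = push ?\<psi> (N V Z) q"
    unfolding push_eq[OF q] A_def B_def E_def by (simp add: N_def Dv_def algebra_simps qq)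
  finally show ?thesis .
qed

end


lemma PD_D: "PD f (s,t) \<Longrightarrow> ((\<lambda>u. f (u,t)) has_real_derivative ds f (s,t)) (at s)"
  "PD f (s,t) \<Longrightarrow> ((\<lambda>v. f (s,v)) has_real_derivative dt f (s,t)) (at t)"
  by (simp_all add: PD_def)

lemma PD_I:
  assumes "((\<lambda>u. f (u,t)) has_real_derivative D1) (at s)" "((\<lambda>v. f (s,v)) has_real_derivative D2) (at t)"
  shows "PD f (s,t)" "ds f (s,t) = D1" "dt f (s,t) = D2"
proof -
  show 1: "ds f (s,t) = D1" using ds_eqR[of f "(s,t)"] assms by simp
  show 2: "dt f (s,t) = D2" using dt_eqR[of f "(s,t)"] assms by simp
  show "PD f (s,t)" unfolding PD_def using assms 1 2 by simp
qed

abbreviation c1 :: "(real \<times> real \<Rightarrow> real \<times> real) \<Rightarrow> real \<times> real \<Rightarrow> real" where "c1 V \<equiv> \<lambda>q. fst (V q)"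
abbreviation c2 :: "(real \<times> real \<Rightarrow> real \<times> real) \<Rightarrow> real \<times> real \<Rightarrow> real" where "c2 V \<equiv> \<lambda>q. snd (V q)"

context cyl begin

lemma kappa_deriv: assumes "s \<in> I" shows "(\<kappa> has_real_derivative vector_derivative \<kappa> (at s)) (at s)"
proof -
  have "(\<lambda>u. (T u \<bullet> T2 u) / (T u \<bullet> T u)) differentiable at s"
    using diffs[OF assms] G_pos[OF assms] by (intro differentiable_divide differentiable_inner) auto
  moreover have "(\<lambda>u. (T u \<bullet> T2 u) / (T u \<bullet> T u)) = \<kappa>" by (auto simp: fun_eq_iff \<kappa>_def)
  ultimately have "\<kappa> differentiable at s" by simp
  then show ?thesis
    by (simp add: vector_derivative_works has_real_derivative_iff_has_vector_derivative)
qed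

lemma N_deriv:
  assumes p: "p = (s,t)" "s \<in> I" and sV: "smooth2_on S V" and sZ: "smooth2_on S Z"
  shows "((\<lambda>u. c1 (N V Z) (u,t)) has_real_derivative
       ds (c1 V) p * ds (c1 Z) p + c1 V p * ds (ds (c1 Z)) p + ds (c2 V) p * dt (c1 Z) p
       + c2 V p * ds (dt (c1 Z)) p + vector_derivative \<kappa> (at s) * c1 V p * c1 Z p + \<kappa> s * ds (c1 V) p * c1 Z p
       + \<kappa> s * c1 V p * ds (c1 Z) p + cc * ds (c2 Z) p * c1 V p + cc * c2 Z p * ds (c1 V) p) (at s)"
   "((\<lambda>v. c1 (N V Z) (s,v)) has_real_derivative
       dt (c1 V) p * ds (c1 Z) p + c1 V p * dt (ds (c1 Z)) p + dt (c2 V) p * dt (c1 Z) p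
       + c2 V p * dt (dt (c1 Z)) p + \<kappa> s * dt (c1 V) p * c1 Z p
       + \<kappa> s * c1 V p * dt (c1 Z) p + cc * dt (c2 Z) p * c1 V p + cc * c2 Z p * dt (c1 V) p) (at t)"
   "((\<lambda>u. c2 (N V Z) (u,t)) has_real_derivative
       ds (c1 V) p * ds (c2 Z) p + c1 V p * ds (ds (c2 Z)) p + ds (c2 V) p * dt (c2 Z) p
       + c2 V p * ds (dt (c2 Z)) p + cc * ds (c2 Z) p * c2 V p + cc * c2 Z p * ds (c2 V) p) (at s)"
   "((\<lambda>v. c2 (N V Z) (s,v)) has_real_derivative
       dt (c1 V) p * ds (c2 Z) p + c1 V p * dt (ds (c2 Z)) p + dt (c2 V) p * dt (c2 Z) p
       + c2 V p * dt (dt (c2 Z)) p + cc * dt (c2 Z) p * c2 V p + cc * c2 Z p * dt (c2 V) p) (at t)"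
proof -
  have pS: "p \<in> S" using p by auto
  note scV1 = smooth_comp[OF sV bounded_linear_fst pS]
  note scV2 = smooth_comp[OF sV bounded_linear_snd pS]
  note scZ1 = smooth_comp[OF sZ bounded_linear_fst pS]
  note scZ2 = smooth_comp[OF sZ bounded_linear_snd pS]
  note D = scV1(1)[unfolded p, THEN PD_D(1)] scV1(1)[unfolded p, THEN PD_D(2)]
    scV2(1)[unfolded p, THEN PD_D(1)] scV2(1)[unfolded p, THEN PD_D(2)]
    scZ1(1)[unfolded p, THEN PD_D(1)] scZ1(1)[unfolded p, THEN PD_D(2)]
    scZ2(1)[unfolded p, THEN PD_D(1)] scZ2(1)[unfolded p, THEN PD_D(2)]
    scZ1(2)[unfolded p, THEN PD_D(1)] scZ1(2)[unfolded p, THEN PD_D(2)]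
    scZ2(2)[unfolded p, THEN PD_D(1)] scZ2(2)[unfolded p, THEN PD_D(2)]
    scZ1(3)[unfolded p, THEN PD_D(1)] scZ1(3)[unfolded p, THEN PD_D(2)]
    scZ2(3)[unfolded p, THEN PD_D(1)] scZ2(3)[unfolded p, THEN PD_D(2)]
    kappa_deriv[OF p(2)]
  show e1: "((\<lambda>u. c1 (N V Z) (u,t)) has_real_derivative
       ds (c1 V) p * ds (c1 Z) p + c1 V p * ds (ds (c1 Z)) p + ds (c2 V) p * dt (c1 Z) p
       + c2 V p * ds (dt (c1 Z)) p + vector_derivative \<kappa> (at s) * c1 V p * c1 Z p + \<kappa> s * ds (c1 V) p * c1 Z p
       + \<kappa> s * c1 V p * ds (c1 Z) p + cc * ds (c2 Z) p * c1 V p + cc * c2 Z p * ds (c1 V) p) (at s)"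
    unfolding N_def Dv_def p by (auto intro!: derivative_eq_intros D simp: algebra_simps)
  show e2: "((\<lambda>v. c1 (N V Z) (s,v)) has_real_derivative
       dt (c1 V) p * ds (c1 Z) p + c1 V p * dt (ds (c1 Z)) p + dt (c2 V) p * dt (c1 Z) p
       + c2 V p * dt (dt (c1 Z)) p + \<kappa> s * dt (c1 V) p * c1 Z p
       + \<kappa> s * c1 V p * dt (c1 Z) p + cc * dt (c2 Z) p * c1 V p + cc * c2 Z p * dt (c1 V) p) (at t)"
    unfolding N_def Dv_def p by (auto intro!: derivative_eq_intros D simp: algebra_simps)
  show e3: "((\<lambda>u. c2 (N V Z) (u,t)) has_real_derivative
       ds (c1 V) p * ds (c2 Z) p + c1 V p * ds (ds (c2 Z)) p + ds (c2 V) p * dt (c2 Z) p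
       + c2 V p * ds (dt (c2 Z)) p + cc * ds (c2 Z) p * c2 V p + cc * c2 Z p * ds (c2 V) p) (at s)"
    unfolding N_def Dv_def p by (auto intro!: derivative_eq_intros D simp: algebra_simps)
  show e4: "((\<lambda>v. c2 (N V Z) (s,v)) has_real_derivative
       dt (c1 V) p * ds (c2 Z) p + c1 V p * dt (ds (c2 Z)) p + dt (c2 V) p * dt (c2 Z) p
       + c2 V p * dt (dt (c2 Z)) p + cc * dt (c2 Z) p * c2 V p + cc * c2 Z p * dt (c2 V) p) (at t)"
    unfolding N_def Dv_def p by (auto intro!: derivative_eq_intros D simp: algebra_simps)
qed

end


context cyl begin

lemma ind_conn_cong:
  assumes eq: "\<forall>q\<in>S. F q = G q" and p: "p \<in> S"
  shows "ind_conn C (\<lambda>(s', t'). \<gamma> s' + t' *\<^sub>R w) X F p = ind_conn C (\<lambda>(s', t'). \<gamma> s' + t' *\<^sub>R w) X G p"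
proof -
  have 1: "ds F p = ds G p" unfolding ds_def
    by (rule vd_cong_open[OF I_open]) (use p eq in auto)
  have "(\<lambda>v. F (fst p, v)) = (\<lambda>v. G (fst p, v))" using p eq by auto
  then have 2: "dt F p = dt G p" unfolding dt_def by simp
  have 3: "F p = G p" using eq p by auto
  show ?thesis unfolding ind_conn_def snm_conn_def dirD_def 1 2 3 ..
qed

lemma N_fst_at: "fst (N V W q) = c1 V q * ds (c1 W) q + c2 V q * dt (c1 W) q + \<kappa> (fst q) * c1 V q * c1 W q + cc * c2 W q * c1 V q"
  by (simp add: N_def Dv_def)

lemma N_snd_at: "snd (N V W q) = c1 V q * ds (c2 W) q + c2 V q * dt (c2 W) q + cc * c2 W q * c2 V q"
  by (simp add: N_def Dv_def)

lemma curv_formula: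
  assumes s: "s \<in> I" and sX: "smooth2_on S X" and sY: "smooth2_on S Y" and sZ: "smooth2_on S Z"
  shows "ind_curv C (\<lambda>(s', t'). \<gamma> s' + t' *\<^sub>R w) X Y Z (s,t)
     = (cc*cc*c2 Z (s,t)*(c2 Y (s,t) * c1 X (s,t) - c2 X (s,t) * c1 Y (s,t))) *\<^sub>R T s"
proof -
  let ?\<psi> = "\<lambda>(s'::real, t'::real). \<gamma> s' + t' *\<^sub>R w"
  let ?p = "(s,t)"
  have pS: "?p \<in> S" using s by auto
  have PZ: "PD (c1 Z) q" "PD (c2 Z) q" if "q \<in> S" for q
    using smooth_comp(1)[OF sZ bounded_linear_fst that] smooth_comp(1)[OF sZ bounded_linear_snd that] by auto
  have inY: "\<forall>q\<in>S. ind_conn C ?\<psi> Y (push ?\<psi> Z) q = push ?\<psi> (N Y Z) q"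
    using conn_formula PZ by blast
  have inX: "\<forall>q\<in>S. ind_conn C ?\<psi> X (push ?\<psi> Z) q = push ?\<psi> (N X Z) q"
    using conn_formula PZ by blast
  note dY = N_deriv[OF refl s sY sZ] and dX = N_deriv[OF refl s sX sZ]
  have A: "ind_conn C ?\<psi> X (ind_conn C ?\<psi> Y (push ?\<psi> Z)) ?p = push ?\<psi> (N X (N Y Z)) ?p"
    using ind_conn_cong[OF inY pS] conn_formula[OF pS PD_I(1)[OF dY(1,2)] PD_I(1)[OF dY(3,4)]] by simp
  have B: "ind_conn C ?\<psi> Y (ind_conn C ?\<psi> X (push ?\<psi> Z)) ?p = push ?\<psi> (N Y (N X Z)) ?p"
    using ind_conn_cong[OF inX pS] conn_formula[OF pS PD_I(1)[OF dX(1,2)] PD_I(1)[OF dX(3,4)]] by simp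
  have L: "ind_conn C ?\<psi> (lie X Y) (push ?\<psi> Z) ?p = push ?\<psi> (N (lie X Y) Z) ?p"
    using conn_formula[OF pS PZ[OF pS]] by simp
  have curv: "ind_curv C ?\<psi> X Y Z ?p =
      (fst (N X (N Y Z) ?p) - fst (N Y (N X Z) ?p) - fst (N (lie X Y) Z ?p)) *\<^sub>R T s
    + (snd (N X (N Y Z) ?p) - snd (N Y (N X Z) ?p) - snd (N (lie X Y) Z ?p)) *\<^sub>R w"
    unfolding ind_curv_def A B L push_eq[OF pS] by (simp add: algebra_simps)
  note vY = PD_I(2,3)[OF dY(1,2)] PD_I(2,3)[OF dY(3,4)]
  note vX = PD_I(2,3)[OF dX(1,2)] PD_I(2,3)[OF dX(3,4)]
  have lie1: "c1 (lie X Y) ?p = c1 X ?p * ds (c1 Y) ?p + c2 X ?p * dt (c1 Y) ?p - (c1 Y ?p * ds (c1 X) ?p + c2 Y ?p * dt (c1 X) ?p)"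
    using smooth_comp(4,5)[OF sY bounded_linear_fst pS] smooth_comp(4,5)[OF sX bounded_linear_fst pS]
    by (simp add: lie_def dirD_def)
  have lie2: "c2 (lie X Y) ?p = c1 X ?p * ds (c2 Y) ?p + c2 X ?p * dt (c2 Y) ?p - (c1 Y ?p * ds (c2 X) ?p + c2 Y ?p * dt (c2 X) ?p)"
    using smooth_comp(4,5)[OF sY bounded_linear_snd pS] smooth_comp(4,5)[OF sX bounded_linear_snd pS]
    by (simp add: lie_def dirD_def)
  have cl1: "ds (dt (c1 Z)) ?p = dt (ds (c1 Z)) ?p"
    using smooth_clairaut[OF sZ bounded_linear_fst pS] by simp
  have cl2: "ds (dt (c2 Z)) ?p = dt (ds (c2 Z)) ?p"
    using smooth_clairaut[OF sZ bounded_linear_snd pS] by simp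
  have \<alpha>: "fst (N X (N Y Z) ?p) - fst (N Y (N X Z) ?p) - fst (N (lie X Y) Z ?p)
      = cc*cc*c2 Z ?p*(c2 Y ?p * c1 X ?p - c2 X ?p * c1 Y ?p)"
    unfolding N_fst_at[of X "N Y Z" ?p] N_fst_at[of Y "N X Z" ?p] N_fst_at[of "lie X Y" Z ?p]
      N_snd_at[of X "N Y Z" ?p] N_snd_at[of Y "N X Z" ?p]
      vY vX N_fst_at[of Y Z ?p] N_snd_at[of Y Z ?p] N_fst_at[of X Z ?p] N_snd_at[of X Z ?p] lie1 lie2 cl1 cl2 fst_conv
    by (simp add: algebra_simps)
  have \<beta>: "snd (N X (N Y Z) ?p) - snd (N Y (N X Z) ?p) - snd (N (lie X Y) Z ?p) = 0"
    unfolding N_snd_at[of X "N Y Z" ?p] N_snd_at[of Y "N X Z" ?p] N_snd_at[of "lie X Y" Z ?p]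
      vY vX N_fst_at[of Y Z ?p] N_snd_at[of Y Z ?p] N_fst_at[of X Z ?p] N_snd_at[of X Z ?p] lie1 lie2 cl1 cl2 fst_conv
    by (simp add: algebra_simps)
  show ?thesis unfolding curv \<alpha> \<beta> by simp
qed

end


context cyl begin

lemma sect_half:
  assumes s: "s \<in> I" and s1: "smooth2_on S E1" and s2: "smooth2_on S E2"
    and n1: "norm (push (\<lambda>(s', t'). \<gamma> s' + t' *\<^sub>R w) E1 (s, t)) = 1"
    and n2: "norm (push (\<lambda>(s', t'). \<gamma> s' + t' *\<^sub>R w) E2 (s, t)) = 1"
    and o: "push (\<lambda>(s', t'). \<gamma> s' + t' *\<^sub>R w) E1 (s, t) \<bullet> push (\<lambda>(s', t'). \<gamma> s' + t' *\<^sub>R w) E2 (s, t) = 0"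
  shows "sect_curv C (\<lambda>(s', t'). \<gamma> s' + t' *\<^sub>R w) E1 E2 (s, t) = 1/2"
proof -
  have pS: "(s,t) \<in> S" using s by auto
  define a where "a = c1 E1 (s,t)"
  define b where "b = c2 E1 (s,t)"
  define c where "c = c1 E2 (s,t)"
  define d where "d = c2 E2 (s,t)"
  define G where "G = T s \<bullet> T s"
  have Tw': "T s \<bullet> w = 0" "w \<bullet> T s = 0" using Tw[OF s] by (auto simp: inner_commute)
  have P1: "push (\<lambda>(s', t'). \<gamma> s' + t' *\<^sub>R w) E1 (s, t) = a *\<^sub>R T s + b *\<^sub>R w"
    using push_eq[OF pS] a_def b_def by simp
  have P2: "push (\<lambda>(s', t'). \<gamma> s' + t' *\<^sub>R w) E2 (s, t) = c *\<^sub>R T s + d *\<^sub>R w"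
    using push_eq[OF pS] c_def d_def by simp
  have e1: "a*a*G + b*b = 1"
  proof -
    have "(a *\<^sub>R T s + b *\<^sub>R w) \<bullet> (a *\<^sub>R T s + b *\<^sub>R w) = 1" using n1 P1 by (simp add: norm_eq_1)
    then show ?thesis using Tw' ww by (simp add: inner_add_left inner_add_right G_def algebra_simps)
  qed
  have e2: "c*c*G + d*d = 1"
  proof -
    have "(c *\<^sub>R T s + d *\<^sub>R w) \<bullet> (c *\<^sub>R T s + d *\<^sub>R w) = 1" using n2 P2 by (simp add: norm_eq_1)
    then show ?thesis using Tw' ww by (simp add: inner_add_left inner_add_right G_def algebra_simps)
  qed
  have e3: "a*c*G + b*d = 0"
  proof -
    have "(a *\<^sub>R T s + b *\<^sub>R w) \<bullet> (c *\<^sub>R T s + d *\<^sub>R w) = 0" using o P1 P2 by simp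
    then show ?thesis using Tw' ww by (simp add: inner_add_left inner_add_right G_def algebra_simps)
  qed
  have id: "G * (a*d - b*c)^2 = (a*a*G + b*b) * (c*c*G + d*d) - (a*c*G + b*d)^2"
    by (simp add: power2_eq_square algebra_simps)
  have K: "G * (a*d - b*c)^2 = 1" using id e1 e2 e3 by simp
  have R1: "ind_curv C (\<lambda>(s', t'). \<gamma> s' + t' *\<^sub>R w) E1 E2 E2 (s,t) = (cc*cc*d*(d*a - b*c)) *\<^sub>R T s"
    using curv_formula[OF s s1 s2 s2] a_def b_def c_def d_def by simp
  have R2: "ind_curv C (\<lambda>(s', t'). \<gamma> s' + t' *\<^sub>R w) E2 E1 E1 (s,t) = (cc*cc*b*(b*c - d*a)) *\<^sub>R T s"
    using curv_formula[OF s s2 s1 s1] a_def b_def c_def d_def by simp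
  have "sect_curv C (\<lambda>(s', t'). \<gamma> s' + t' *\<^sub>R w) E1 E2 (s, t)
      = (1/2) * ((cc*cc) * (G * (a*d - b*c)^2))"
    unfolding sect_curv_def R1 R2 P1 P2 using Tw'
    by (simp add: inner_add_right G_def power2_eq_square algebra_simps)
  also have "\<dots> = 1/2" using K cc_sq by simp
  finally show ?thesis .
qed

end

theorem corollary3p2:
  fixes C w :: "real^3" and \<gamma> :: "real \<Rightarrow> real^3" and I :: "real set"
  assumes C_unit: "norm C = 1"
    and w_unit: "norm w = 1"
    and w_parallel: "\<exists>c. w = c *\<^sub>R C"
    and I_open: "open I" and I_interval: "is_interval I"
    and \<gamma>_smooth: "smooth1_on I \<gamma>"
    and \<gamma>_regular: "\<forall>s\<in>I. vector_derivative \<gamma> (at s) \<noteq> 0"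
    and \<gamma>_planar: "\<exists>c. \<forall>s\<in>I. \<gamma> s \<bullet> w = c"
  shows "\<forall>s\<in>I. \<forall>t::real. \<forall>E1 E2.
           smooth2_on (I \<times> UNIV) E1 \<and> smooth2_on (I \<times> UNIV) E2 \<and>
           norm (push (\<lambda>(s', t'). \<gamma> s' + t' *\<^sub>R w) E1 (s, t)) = 1 \<and>
           norm (push (\<lambda>(s', t'). \<gamma> s' + t' *\<^sub>R w) E2 (s, t)) = 1 \<and>
           push (\<lambda>(s', t'). \<gamma> s' + t' *\<^sub>R w) E1 (s, t) \<bullet> push (\<lambda>(s', t'). \<gamma> s' + t' *\<^sub>R w) E2 (s, t) = 0
           \<longrightarrow> sect_curv C (\<lambda>(s', t'). \<gamma> s' + t' *\<^sub>R w) E1 E2 (s, t) = 1/2"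
proof -
  interpret cyl C w \<gamma> I
    using assms by unfold_locales auto
  show ?thesis using sect_half by blast
qed


end
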